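(* If $w \in A^*$ is arbitrary, then the clean overlap prefix of $w$, if any, can be found in time linear in the length of $w$.
   Context: Let $\mathcal{P}=\langle A \mid R\rangle$ be a fixed finite monoid presentation satisfying the small overlap condition $C(4)$: no relation word (a word on either side of a relation in $R$) can be written as a product of fewer than 4 pieces, where a piece is a word that is a factor of at least two distinct relation words, or occurs more than once (possibly overlapping) as a factor of a single relation word. Every relation word $u$ factors as $u=X_uY_uZ_u$, where $X_u$ is the longest prefix of $u$ that is a piece, $Z_u$ is the longest suffix of $u$ that is a piece, and $Y_u$ is the middle word. Let $M$ denote the number of distinct relation words and $\delta$ the length of the longest relation word. A relation prefix of $w$ is a prefix of the form $aXY$ with $a\in A^*$ and $X,Y$ the maximal piece prefix and middle word of some relation word. A relation prefix $bX_1Y_1'\cdots X_{n-1}Y_{n-1}'X_nY_n$ ($n\ge 1$) is an overlap prefix if each $Y_i'$ is a proper non-empty prefix of the middle word $Y_i$ of some relation word $X_iY_iZ_i$, and no factor of the form $X_0Y_0$ (maximal piece prefix followed by middle word of a relation word) begins before the end of $b$. A relation prefix $aXY$ of $w$ is clean if $w$ has no prefix of the form $aXY'X_0Y_0$ with $Y'$ a proper prefix of $Y$; a clean overlap prefix is an overlap prefix that is also clean. The presentation is fixed, so constants depending on $M$ and $\delta$ are ignored in the complexity. *)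

theory Defs
  imports Main "HOL-Library.Sublist"
begin

definition rel_words :: "('a list \<times> 'a list) set \<Rightarrow> 'a list set" where
  "rel_words R = fst ` R \<union> snd ` R"

definition occurrences :: "'a list \<Rightarrow> 'a list \<Rightarrow> nat set" where
  "occurrences p u = {i. i + length p \<le> length u \<and> take (length p) (drop i u) = p}"

definition piece :: "('a list \<times> 'a list) set \<Rightarrow> 'a list \<Rightarrow> bool" where
  "piece R p \<longleftrightarrow>
     (\<exists>u\<in>rel_words R. \<exists>v\<in>rel_words R. u \<noteq> v \<and> sublist p u \<and> sublist p v)
   \<or> (\<exists>u\<in>rel_words R. 2 \<le> card (occurrences p u))"

definition C4 :: "('a list \<times> 'a list) set \<Rightarrow> bool" where
  "C4 R \<longleftrightarrow> (\<forall>u\<in>rel_words R. \<not> (\<exists>ps. length ps < 4 \<and> (\<forall>p\<in>set ps. piece R p) \<and> concat ps = u))"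

definition presentation :: "'a set \<Rightarrow> ('a list \<times> 'a list) set \<Rightarrow> bool" where
  "presentation A R \<longleftrightarrow> finite A \<and> finite R \<and> R \<subseteq> lists A \<times> lists A"

definition Xp :: "('a list \<times> 'a list) set \<Rightarrow> 'a list \<Rightarrow> 'a list" where
  "Xp R u = take (GREATEST k. k \<le> length u \<and> piece R (take k u)) u"

definition Zp :: "('a list \<times> 'a list) set \<Rightarrow> 'a list \<Rightarrow> 'a list" where
  "Zp R u = drop (length u - (GREATEST k. k \<le> length u \<and> piece R (drop (length u - k) u))) u"

definition Yp :: "('a list \<times> 'a list) set \<Rightarrow> 'a list \<Rightarrow> 'a list" where
  "Yp R u = take (length u - length (Zp R u) - length (Xp R u)) (drop (length (Xp R u)) u)"

definition clean_rel_prefix :: "('a list \<times> 'a list) set \<Rightarrow> 'a list \<Rightarrow> 'a list \<Rightarrow> 'a list \<Rightarrow> bool" where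
  "clean_rel_prefix R w a u \<longleftrightarrow>
     u \<in> rel_words R \<and> prefix (a @ Xp R u @ Yp R u) w \<and>
     \<not> (\<exists>Y' u0. strict_prefix Y' (Yp R u) \<and> u0 \<in> rel_words R \<and>
               prefix (a @ Xp R u @ Y' @ Xp R u0 @ Yp R u0) w)"

text \<open>A decomposition b X_1 Y_1' ... X_{n-1} Y_{n-1}' X_n Y_n of the prefix p of w, with
  us = [u_1,...,u_n] the relation words and ys = [Y_1',...,Y_{n-1}'].\<close>
definition overlap_decomp ::
  "('a list \<times> 'a list) set \<Rightarrow> 'a list \<Rightarrow> 'a list \<Rightarrow> 'a list \<Rightarrow> 'a list list \<Rightarrow> 'a list list \<Rightarrow> bool" where
  "overlap_decomp R w p b us ys \<longleftrightarrow>
     prefix p w \<and> 1 \<le> length us \<and> length ys = length us - 1 \<and>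
     set us \<subseteq> rel_words R \<and>
     (\<forall>i < length ys. ys ! i \<noteq> [] \<and> strict_prefix (ys ! i) (Yp R (us ! i))) \<and>
     p = b @ concat (map (\<lambda>i. Xp R (us ! i) @ ys ! i) [0..<length ys])
           @ Xp R (last us) @ Yp R (last us) \<and>
     \<not> (\<exists>i u0. i < length b \<and> u0 \<in> rel_words R \<and>
              take (length (Xp R u0 @ Yp R u0)) (drop i w) = Xp R u0 @ Yp R u0)"

definition overlap_prefix :: "('a list \<times> 'a list) set \<Rightarrow> 'a list \<Rightarrow> 'a list \<Rightarrow> bool" where
  "overlap_prefix R w p \<longleftrightarrow> (\<exists>b us ys. overlap_decomp R w p b us ys)"

definition clean_overlap_prefix :: "('a list \<times> 'a list) set \<Rightarrow> 'a list \<Rightarrow> 'a list \<Rightarrow> bool" where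
  "clean_overlap_prefix R w p \<longleftrightarrow>
     (\<exists>b us ys. overlap_decomp R w p b us ys \<and>
        clean_rel_prefix R w (b @ concat (map (\<lambda>i. Xp R (us ! i) @ ys ! i) [0..<length ys])) (last us))"

text \<open>Registers are indexed by naturals and hold naturals (unit cost). The input word is
  read-only; ReadIn r s sets register r to (code of letter number (reg s)) + 1, or 0 if
  reg s is beyond the end of the input.\<close>

datatype instr =
    LoadConst nat nat
  | Add nat nat nat
  | Sub nat nat nat
  | ReadIn nat nat
  | Load nat nat
  | Store nat nat
  | JumpZ nat nat
  | Halt

type_synonym config = "nat \<times> (nat \<Rightarrow> nat)"

definition halted :: "instr list \<Rightarrow> config \<Rightarrow> bool" where
  "halted P c \<longleftrightarrow> fst c \<ge> length P \<or> P ! fst c = Halt"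

fun exec :: "nat list \<Rightarrow> instr \<Rightarrow> config \<Rightarrow> config" where
  "exec inp (LoadConst r k) (pc, g) = (Suc pc, g(r := k))"
| "exec inp (Add r s t) (pc, g) = (Suc pc, g(r := g s + g t))"
| "exec inp (Sub r s t) (pc, g) = (Suc pc, g(r := g s - g t))"
| "exec inp (ReadIn r s) (pc, g) =
     (Suc pc, g(r := (if g s < length inp then inp ! g s + 1 else 0)))"
| "exec inp (Load r s) (pc, g) = (Suc pc, g(r := g (g s)))"
| "exec inp (Store r s) (pc, g) = (Suc pc, g(g r := g s))"
| "exec inp (JumpZ r tgt) (pc, g) = (if g r = 0 then tgt else Suc pc, g)"
| "exec inp Halt (pc, g) = (pc, g)"

definition step :: "instr list \<Rightarrow> nat list \<Rightarrow> config \<Rightarrow> config" where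
  "step P inp c = (if halted P c then c else exec inp (P ! fst c) c)"

definition run :: "instr list \<Rightarrow> nat list \<Rightarrow> nat \<Rightarrow> config" where
  "run P inp t = (step P inp ^^ t) (0, \<lambda>_. 0)"

definition output_ok :: "('a list \<times> 'a list) set \<Rightarrow> 'a list \<Rightarrow> nat \<Rightarrow> bool" where
  "output_ok R w out \<longleftrightarrow>
     (if (\<exists>p. clean_overlap_prefix R w p)
      then (\<exists>k. out = Suc k \<and> k \<le> length w \<and> clean_overlap_prefix R w (take k w))
      else out = 0)"

end

theory Submission
  imports Defs
begin


lemma prefix_take_drop: "prefix (xs @ ys) w \<Longrightarrow> take (length ys) (drop (length xs) w) = ys"
  by (auto simp: prefix_def)

lemma prefix_app_take_drop: "prefix xs w \<Longrightarrow> take (length ys) (drop (length xs) w) = ys \<Longrightarrow> prefix (xs @ ys) w"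
  unfolding prefix_def
  by (metis append_assoc append_eq_conv_conj append_take_drop_id)

lemma take_drop_eqI: "take n w = take n w' \<Longrightarrow> i + l \<le> n \<Longrightarrow> take l (drop i w) = take l (drop i w')"
  by (metis min.absorb1 take_drop take_take add.commute)

lemma take_drop_shift: "drop p w1 = drop p' w2 \<Longrightarrow> take l (drop (p+s) w1) = take l (drop (p'+s) w2)"
  by (metis add.commute drop_drop)

context fixes R :: "('a list \<times> 'a list) set" begin

abbreviation XY where "XY u \<equiv> Xp R u @ Yp R u"

definition occ :: "'a list \<Rightarrow> nat \<Rightarrow> bool" where
  "occ w i \<longleftrightarrow> (\<exists>u0\<in>rel_words R. take (length (XY u0)) (drop i w) = XY u0)"

inductive reach :: "'a list \<Rightarrow> nat \<Rightarrow> bool" for w where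
  start: "q \<le> length w \<Longrightarrow> (\<forall>i<q. \<not> occ w i) \<Longrightarrow> reach w q"
| stp: "reach w q \<Longrightarrow> u \<in> rel_words R \<Longrightarrow> 0 < j \<Longrightarrow> j < length (Yp R u) \<Longrightarrow>
     take (length (Xp R u) + j) (drop q w) = Xp R u @ take j (Yp R u) \<Longrightarrow> reach w (q + length (Xp R u) + j)"

definition Qc :: "'a list \<Rightarrow> nat \<Rightarrow> bool" where
  "Qc w k \<longleftrightarrow> (\<exists>q u. reach w q \<and> u \<in> rel_words R \<and> take (length (XY u)) (drop q w) = XY u \<and>
      k = q + length (XY u) \<and> (\<forall>j<length (Yp R u). \<not> occ w (q + length (Xp R u) + j)))"

definition chn :: "'a list list \<Rightarrow> 'a list list \<Rightarrow> 'a list" where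
  "chn us ys = concat (map (\<lambda>i. Xp R (us ! i) @ ys ! i) [0..<length ys])"

lemma chain_snoc: "length us = length ys \<Longrightarrow> chn (us @ [u]) (ys @ [y]) = chn us ys @ Xp R u @ y"
proof -
  assume l: "length us = length ys"
  have m: "map (\<lambda>i. Xp R ((us @ [u]) ! i) @ (ys @ [y]) ! i) [0..<length ys] =
        map (\<lambda>i. Xp R (us ! i) @ ys ! i) [0..<length ys]"
    by (rule map_cong) (auto simp: nth_append l)
  have e: "(us @ [u]) ! length ys = u" "(ys @ [y]) ! length ys = y" using l by (metis nth_append_length)+
  show ?thesis unfolding chn_def by (simp del: nth_append add: m e)
qed

lemma chain_app: "length ys \<le> length us \<Longrightarrow> chn (us @ vs) ys = chn us ys"
  unfolding chn_def by (rule arg_cong[where f=concat], rule map_cong) (auto simp: nth_append)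

lemma reach_decomp:
  assumes "reach w q"
  shows "\<exists>b us ys. length us = length ys \<and> set us \<subseteq> rel_words R \<and>
     (\<forall>i<length ys. ys!i \<noteq> [] \<and> strict_prefix (ys!i) (Yp R (us!i))) \<and>
     prefix (b @ chn us ys) w \<and> length (b @ chn us ys) = q \<and>
     \<not> (\<exists>i u0. i < length b \<and> u0 \<in> rel_words R \<and>
              take (length (Xp R u0 @ Yp R u0)) (drop i w) = Xp R u0 @ Yp R u0)"
  using assms
proof induction
  case (start q)
  show ?case
    apply (rule exI[of _ "take q w"], rule exI[of _ "[]"], rule exI[of _ "[]"])
    using start by (auto simp: chn_def occ_def min_def take_is_prefix)
next
  case (stp q u j)
  then obtain b us ys where h: "length us = length ys" "set us \<subseteq> rel_words R"
     "\<forall>i<length ys. ys!i \<noteq> [] \<and> strict_prefix (ys!i) (Yp R (us!i))"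
     "prefix (b @ chn us ys) w" "length (b @ chn us ys) = q"
     "\<not> (\<exists>i u0. i < length b \<and> u0 \<in> rel_words R \<and>
              take (length (Xp R u0 @ Yp R u0)) (drop i w) = Xp R u0 @ Yp R u0)" by blast
  let ?y = "take j (Yp R u)"
  show ?case
  proof (rule exI[of _ b], rule exI[of _ "us @ [u]"], rule exI[of _ "ys @ [?y]"], intro conjI)
    show "\<forall>i<length (ys @ [?y]). (ys @ [?y]) ! i \<noteq> [] \<and> strict_prefix ((ys @ [?y]) ! i) (Yp R ((us @ [u]) ! i))"
    proof (intro allI impI)
      fix i assume "i < length (ys @ [?y])"
      then consider "i < length ys" | "i = length ys" by fastforce
      then show "(ys @ [?y]) ! i \<noteq> [] \<and> strict_prefix ((ys @ [?y]) ! i) (Yp R ((us @ [u]) ! i))"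
      proof cases
        case 1 then show ?thesis using h by (auto simp: nth_append)
      next
        case 2
        have "strict_prefix ?y (Yp R u)" using stp.hyps(4)
          by (metis length_take min.absorb4 nat_less_le prefix_order.le_less take_is_prefix)
        then show ?thesis using 2 h(1) stp.hyps(3,4) by (auto simp: nth_append)
      qed
    qed
    have "prefix ((b @ chn us ys) @ (Xp R u @ ?y)) w"
      apply (rule prefix_app_take_drop[OF h(4)])
      using stp.hyps(4,5) h(5) by simp
    then show "prefix (b @ chn (us @ [u]) (ys @ [?y])) w" by (simp add: chain_snoc h(1))
    show "length (b @ chn (us @ [u]) (ys @ [?y])) = q + length (Xp R u) + j"
      using h(1,5) stp.hyps(4) by (simp add: chain_snoc)
  qed (use h stp in auto)
qed

lemma Qc_imp: assumes "Qc w k" shows "k \<le> length w \<and> clean_overlap_prefix R w (take k w)"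
proof -
  obtain q u where q: "reach w q" "u \<in> rel_words R" "take (length (XY u)) (drop q w) = XY u"
      "k = q + length (XY u)" "\<forall>j<length (Yp R u). \<not> occ w (q + length (Xp R u) + j)"
    using assms unfolding Qc_def by blast
  obtain b us ys where h: "length us = length ys" "set us \<subseteq> rel_words R"
     "\<forall>i<length ys. ys!i \<noteq> [] \<and> strict_prefix (ys!i) (Yp R (us!i))"
     "prefix (b @ chn us ys) w" "length (b @ chn us ys) = q"
     "\<not> (\<exists>i u0. i < length b \<and> u0 \<in> rel_words R \<and>
              take (length (Xp R u0 @ Yp R u0)) (drop i w) = Xp R u0 @ Yp R u0)"
    using reach_decomp[OF q(1)] by blast
  let ?a = "b @ chn us ys"
  have pw: "prefix (?a @ XY u) w" using prefix_app_take_drop[OF h(4)] q(3) h(5) by simp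
  have lk: "length (?a @ XY u) = k" using h(5) q(4) by simp
  have kw: "k \<le> length w" using pw lk prefix_length_le by fastforce
  have tk: "take k w = ?a @ XY u" using pw lk by (metis prefix_def append_eq_conv_conj)
  have ch: "chn (us @ [u]) ys = chn us ys" using chain_app h(1) by simp
  have od: "overlap_decomp R w (take k w) b (us @ [u]) ys"
    unfolding overlap_decomp_def
    using h q(2) tk ch pw by (auto simp: nth_append chn_def take_is_prefix)
  have cl: "clean_rel_prefix R w ?a u"
    unfolding clean_rel_prefix_def
  proof (intro conjI notI)
    show "u \<in> rel_words R" by fact
    show "prefix (?a @ Xp R u @ Yp R u) w" using pw by simp
    assume "\<exists>Y' u0. strict_prefix Y' (Yp R u) \<and> u0 \<in> rel_words R \<and> prefix (?a @ Xp R u @ Y' @ Xp R u0 @ Yp R u0) w"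
    then obtain Y' u0 where y: "strict_prefix Y' (Yp R u)" "u0 \<in> rel_words R"
        "prefix ((?a @ Xp R u @ Y') @ Xp R u0 @ Yp R u0) w" by auto
    have "take (length (XY u0)) (drop (length (?a @ Xp R u @ Y')) w) = XY u0"
      using prefix_take_drop[OF y(3)] by simp
    then have "occ w (q + length (Xp R u) + length Y')" using y(2) h(5) unfolding occ_def by (auto simp: add.assoc)
    moreover have "length Y' < length (Yp R u)" using y(1) prefix_length_less by blast
    ultimately show False using q(5) by blast
  qed
  show ?thesis unfolding clean_overlap_prefix_def
    apply (intro conjI kw)
    apply (rule exI[of _ b], rule exI[of _ "us@[u]"], rule exI[of _ ys])
    using od cl ch by (simp add: chn_def)
qed

end



context fixes R :: "('a list \<times> 'a list) set" begin

lemma concat_map_upt_split: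
  assumes "i < n"
  shows "concat (map g [0..<n]) = concat (map g [0..<i]) @ g i @ concat (map g [Suc i..<n])"
proof -
  have "[0..<n] = [0..<i] @ [i..<n]" using upt_add_eq_append[of 0 i "n-i"] assms by simp
  then have "[0..<n] = [0..<i] @ i # [Suc i..<n]" using upt_conv_Cons[OF assms] by simp
  then show ?thesis by simp
qed

lemma imp_Qc:
  assumes "clean_overlap_prefix R w p"
  shows "Qc R w (length p) \<and> p = take (length p) w"
proof -
  obtain b us ys where od: "overlap_decomp R w p b us ys" and
    cl: "clean_rel_prefix R w (b @ concat (map (\<lambda>i. Xp R (us ! i) @ ys ! i) [0..<length ys])) (last us)"
    using assms unfolding clean_overlap_prefix_def by blast
  let ?g = "\<lambda>i. Xp R (us ! i) @ ys ! i"
  let ?n = "length ys"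
  let ?a = "b @ concat (map ?g [0..<?n])"
  have pw: "prefix p w" and lus: "1 \<le> length us" "length ys = length us - 1"
    and sus: "set us \<subseteq> rel_words R"
    and ysp: "\<forall>i < length ys. ys ! i \<noteq> [] \<and> strict_prefix (ys ! i) (Yp R (us ! i))"
    and pe: "p = ?a @ Xp R (last us) @ Yp R (last us)"
    and nb: "\<not> (\<exists>i u0. i < length b \<and> u0 \<in> rel_words R \<and>
              take (length (Xp R u0 @ Yp R u0)) (drop i w) = Xp R u0 @ Yp R u0)"
    using od unfolding overlap_decomp_def by auto
  have r: "reach R w (length b + length (concat (map ?g [0..<i])))" if "i \<le> ?n" for i
    using that
  proof (induction i)
    case 0
    have "length b \<le> length w" using pw pe prefix_length_le by fastforce
    then show ?case using nb by (auto intro!: reach.start simp: occ_def)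
  next
    case (Suc i)
    then have i: "i < ?n" by simp
    let ?q = "length b + length (concat (map ?g [0..<i]))"
    have IH: "reach R w ?q" using Suc by simp
    have ui: "us ! i \<in> rel_words R" using sus lus i by auto
    have sp: "strict_prefix (ys!i) (Yp R (us!i))" "ys!i \<noteq> []" using ysp i by auto
    define j where "j = length (ys!i)"
    have j: "ys ! i = take j (Yp R (us ! i))" "0 < j" "j < length (Yp R (us ! i))"
      using sp unfolding j_def by (auto simp: strict_prefix_def prefix_def prefix_length_less)
    have pe2: "p = (b @ concat (map ?g [0..<i])) @ ?g i @ (concat (map ?g [Suc i..<?n]) @ Xp R (last us) @ Yp R (last us))"
      using pe concat_map_upt_split[OF i, of ?g] by simp
    have "prefix ((b @ concat (map ?g [0..<i])) @ ?g i) p"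
      by (subst pe2) (simp add: prefix_def)
    then have "prefix ((b @ concat (map ?g [0..<i])) @ ?g i) w" using pw by (rule prefix_order.trans)
    then have t: "take (length (Xp R (us ! i)) + j) (drop ?q w) = Xp R (us ! i) @ take j (Yp R (us ! i))"
      using prefix_take_drop j by fastforce
    have "length (ys ! i) = j" using j by simp
    then have "length b + length (concat (map ?g [0..<Suc i])) = ?q + length (Xp R (us ! i)) + j"
      by simp
    then show ?case using reach.stp[OF IH ui j(2) j(3) t] by (simp add: add.assoc)
  qed
  let ?u = "last us"
  have lu: "?u \<in> rel_words R" using sus lus by (metis One_nat_def last_in_set le_numeral_extra(2) list.size(3) subsetD)
  have rq: "reach R w (length ?a)" using r[of ?n] by simp
  have pa: "prefix (?a @ XY R ?u) w" using pw pe by simp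
  have t: "take (length (XY R ?u)) (drop (length ?a) w) = XY R ?u"
    using prefix_take_drop[OF pa] .
  have clean: "\<forall>j<length (Yp R ?u). \<not> occ R w (length ?a + length (Xp R ?u) + j)"
  proof (intro allI impI notI)
    fix j assume j: "j < length (Yp R ?u)" and o: "occ R w (length ?a + length (Xp R ?u) + j)"
    then obtain u0 where u0: "u0 \<in> rel_words R"
      "take (length (XY R u0)) (drop (length ?a + length (Xp R ?u) + j) w) = XY R u0"
      unfolding occ_def by blast
    have "prefix (?a @ Xp R ?u @ take j (Yp R ?u)) w"
    proof -
      have "prefix (?a @ Xp R ?u @ take j (Yp R ?u)) (?a @ XY R ?u)" by (simp add: take_is_prefix)
      then show ?thesis using pa by (rule prefix_order.trans)
    qed
    then have "prefix ((?a @ Xp R ?u @ take j (Yp R ?u)) @ XY R u0) w"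
      apply (rule prefix_app_take_drop) using u0 j by (simp add: add.assoc)
    moreover have "strict_prefix (take j (Yp R ?u)) (Yp R ?u)" using j
      by (simp add: take_is_prefix prefix_order.less_le)
    ultimately show False using cl u0(1) unfolding clean_rel_prefix_def by auto
  qed
  have "Qc R w (length p)" unfolding Qc_def
    apply (rule exI[of _ "length ?a"], rule exI[of _ ?u])
    using rq lu t clean pe by simp
  moreover have "p = take (length p) w" using pw by (metis prefix_def append_eq_conv_conj)
  ultimately show ?thesis by simp
qed

end



context fixes R :: "('a list \<times> 'a list) set" begin

definition DD :: nat where
  "DD = Suc (Max (insert 0 ((\<lambda>u. length (XY R u)) ` rel_words R)))"

lemma finite_rel_words: "finite R \<Longrightarrow> finite (rel_words R)"
  by (simp add: rel_words_def)

lemma DD_bound: "finite R \<Longrightarrow> u \<in> rel_words R \<Longrightarrow> length (XY R u) < DD"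
  unfolding DD_def using finite_rel_words
  by (metis (no_types, lifting) Max_ge finite_imageI finite_insert image_eqI insertCI le_imp_less_Suc)

lemma DD_pos: "0 < DD" by (simp add: DD_def)

lemma occ_local: assumes "finite R" "take n w = take n w'" "i + DD \<le> n" shows "occ R w i = occ R w' i"
  unfolding occ_def
proof (rule bex_cong[OF refl])
  fix u assume "u \<in> rel_words R"
  then have "length (XY R u) < DD" using DD_bound[OF assms(1)] by blast
  then have "take (length (XY R u)) (drop i w) = take (length (XY R u)) (drop i w')"
    using take_drop_eqI[OF assms(2)] assms(3) by simp
  then show "(take (length (XY R u)) (drop i w) = XY R u) = (take (length (XY R u)) (drop i w') = XY R u)"
    by simp
qed

lemma reach_local: assumes "finite R" "take n w = take n w'" shows "reach R w q \<Longrightarrow> q + DD \<le> n \<Longrightarrow> reach R w' q"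
proof (induction rule: reach.induct)
  case (start q)
  have "length w' \<ge> q"
  proof -
    have "length (take n w) = length (take n w')" using assms(2) by simp
    then show ?thesis using start by (simp add: min_def split: if_splits)
  qed
  moreover have "\<forall>i<q. \<not> occ R w' i"
    using start occ_local[OF assms] by auto
  ultimately show ?case by (rule reach.start)
next
  case (stp q u j)
  have l: "length (XY R u) < DD" using DD_bound[OF assms(1) stp.hyps(2)] .
  have "q + DD \<le> n" using stp by simp
  then have r: "reach R w' q" using stp by simp
  have "take (length (Xp R u) + j) (drop q w') = Xp R u @ take j (Yp R u)"
    using stp.hyps(5) take_drop_eqI[OF assms(2), of q "length (Xp R u) + j"] stp.prems by simp
  then show ?case using reach.stp[OF r stp.hyps(2,3,4)] by simp
qed

lemma Qc_local: assumes "finite R" "take n w = take n w'" "k + DD \<le> n" "Qc R w k" shows "Qc R w' k"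
proof -
  obtain q u where q: "reach R w q" "u \<in> rel_words R" "take (length (XY R u)) (drop q w) = XY R u"
      "k = q + length (XY R u)" "\<forall>j<length (Yp R u). \<not> occ R w (q + length (Xp R u) + j)"
    using assms(4) unfolding Qc_def by blast
  have "reach R w' q" using reach_local[OF assms(1,2) q(1)] assms(3) q(4) by simp
  moreover have "take (length (XY R u)) (drop q w) = take (length (XY R u)) (drop q w')"
    by (rule take_drop_eqI[OF assms(2)]) (use q assms(3) in simp)
  then have "take (length (XY R u)) (drop q w') = XY R u" using q(3) by simp
  moreover have "\<forall>j<length (Yp R u). \<not> occ R w' (q + length (Xp R u) + j)"
    using q(5) occ_local[OF assms(1,2)] q(4) assms(3) by auto
  ultimately show ?thesis unfolding Qc_def using q(2,4) by blast
qed

lemma occ_shift: "drop p1 w1 = drop p2 w2 \<Longrightarrow> occ R w1 (p1 + s) = occ R w2 (p2 + s)"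
  unfolding occ_def using take_drop_shift by metis

lemma reach_det_step:
  assumes fin: "finite R" and W: "2 * DD \<le> W" and dr: "drop p1 w1 = drop p2 w2"
    and p: "p1 \<le> length w1" "p2 \<le> length w2"
    and G: "(\<forall>i<p1. \<not> occ R w1 i) = (\<forall>i<p2. \<not> occ R w2 i)"
    and S: "\<forall>s. s + DD \<le> W \<longrightarrow> reach R w1 (p1+s) = reach R w2 (p2+s)"
    and IH: "\<forall>t'<t. reach R w1 (p1+t') = reach R w2 (p2+t')"
    and r: "reach R w1 (p1+t)"
  shows "reach R w2 (p2+t)"
proof (cases "t + DD \<le> W")
  case True then show ?thesis using S r by blast
next
  case False
  then have tD: "DD < t" using W by simp
  have len: "length w1 - p1 = length w2 - p2" using dr by (metis length_drop)
  from r show ?thesis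
  proof (cases rule: reach.cases)
    case start
    have "p2 + t \<le> length w2" using start(1) len p by simp
    moreover have "\<forall>i<p2+t. \<not> occ R w2 i"
    proof (intro allI impI)
      fix i assume i: "i < p2 + t"
      show "\<not> occ R w2 i"
      proof (cases "i < p2")
        case True then show ?thesis using G start(2) by auto
      next
        case False
        then obtain s where s: "i = p2 + s" "s < t" using i by (metis add_less_cancel_left le_Suc_ex not_less)
        then show ?thesis using start(2) occ_shift[OF dr, of s] by auto
      qed
    qed
    ultimately show ?thesis by (rule reach.start)
  next
    case (stp q u j)
    have l: "length (XY R u) < DD" using DD_bound[OF fin stp(3)] .
    have lj: "length (Xp R u) + j < DD" using l stp(5) by simp
    define t' where "t' = t - (length (Xp R u) + j)"
    have qt: "q = p1 + t'" "t' < t" using stp(1,4) lj tD unfolding t'_def by auto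
    have r2: "reach R w2 (p2 + t')" using IH qt stp(2) by auto
    have "take (length (Xp R u) + j) (drop (p2 + t') w2) = Xp R u @ take j (Yp R u)"
      using stp(6) qt take_drop_shift[OF dr] by metis
    from reach.stp[OF r2 stp(3,4,5) this] show ?thesis using qt stp(1) by (simp add: t'_def)
  qed
qed

lemma reach_det:
  assumes fin: "finite R" and W: "2 * DD \<le> W" and dr: "drop p1 w1 = drop p2 w2"
    and p: "p1 \<le> length w1" "p2 \<le> length w2"
    and G: "(\<forall>i<p1. \<not> occ R w1 i) = (\<forall>i<p2. \<not> occ R w2 i)"
    and S: "\<forall>s. s + DD \<le> W \<longrightarrow> reach R w1 (p1+s) = reach R w2 (p2+s)"
  shows "reach R w1 (p1+t) = reach R w2 (p2+t)"
proof (induction t rule: less_induct)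
  case (less t)
  have a: "\<forall>t'<t. reach R w1 (p1+t') = reach R w2 (p2+t')" using less by blast
  show ?case
  proof
    assume "reach R w1 (p1+t)"
    then show "reach R w2 (p2+t)" using reach_det_step[OF fin W dr p G S a] by blast
  next
    assume "reach R w2 (p2+t)"
    then show "reach R w1 (p1+t)" using reach_det_step[OF fin W dr[symmetric] p(2,1) G[symmetric]] S a
      by metis
  qed
qed

lemma Qc_det:
  assumes fin: "finite R" and W: "2 * DD \<le> W" and dr: "drop p1 w1 = drop p2 w2"
    and p: "p1 + W \<le> length w1" "p2 \<le> length w2"
    and RR: "\<forall>t. reach R w1 (p1+t) = reach R w2 (p2+t)"
    and d: "d \<le> DD" and Q: "Qc R w1 (length w1 - d)"
  shows "Qc R w2 (length w2 - d)"
proof -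
  obtain q u where q: "reach R w1 q" "u \<in> rel_words R" "take (length (XY R u)) (drop q w1) = XY R u"
      "length w1 - d = q + length (XY R u)" "\<forall>j<length (Yp R u). \<not> occ R w1 (q + length (Xp R u) + j)"
    using Q unfolding Qc_def by blast
  have len: "length w1 - p1 = length w2 - p2" using dr by (metis length_drop)
  have l: "length (XY R u) < DD" using DD_bound[OF fin q(2)] .
  define t where "t = q - p1"
  have qt: "q = p1 + t" using q(4) l p W d unfolding t_def by linarith
  have "reach R w2 (p2 + t)" using RR q(1) qt by simp
  moreover have "take (length (XY R u)) (drop (p2 + t) w2) = XY R u"
    using q(3) qt take_drop_shift[OF dr] by metis
  moreover have "length w2 - d = p2 + t + length (XY R u)" using q(4) qt len p d W by linarith
  moreover have "\<forall>j<length (Yp R u). \<not> occ R w2 (p2 + t + length (Xp R u) + j)"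
  proof (intro allI impI)
    fix j assume "j < length (Yp R u)"
    then have "\<not> occ R w1 (p1 + (t + length (Xp R u) + j))" using q(5) qt by (simp add: add.assoc)
    then show "\<not> occ R w2 (p2 + t + length (Xp R u) + j)" using occ_shift[OF dr] by (simp add: add.assoc)
  qed
  moreover note q(2)
  ultimately show ?thesis unfolding Qc_def by blast
qed

definition WW :: nat where "WW = 2 * DD"
definition GG :: "'a list \<Rightarrow> bool" where "GG x = (\<forall>i < length x - WW. \<not> occ R x i)"
definition SS :: "'a list \<Rightarrow> nat set" where "SS x = {d. DD \<le> d \<and> d \<le> WW \<and> reach R x (length x - d)}"
definition fsig :: "'a list \<Rightarrow> 'a list \<times> bool \<times> nat set" where
  "fsig x = (if length x < WW then (x, False, {}) else (drop (length x - WW) x, GG x, SS x))"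
definition sig :: "'a list \<Rightarrow> nat \<Rightarrow> bool" where
  "sig w = (\<lambda>d. d \<le> DD \<and> d \<le> length w \<and> Qc R w (length w - d))"
definition st :: "'a list \<Rightarrow> 'a list \<Rightarrow> nat \<Rightarrow> bool" where
  "st x = (\<lambda>z. sig (x @ z))"

lemma fsig_det: assumes fin: "finite R" and e: "fsig x = fsig y" shows "st x = st y"
proof (cases "length x < WW")
  case True
  have "length y < WW"
  proof (rule ccontr)
    assume "\<not> length y < WW"
    then have "fst (fsig y) = drop (length y - WW) y" "fst (fsig x) = x" using True by (auto simp: fsig_def)
    then show False using e True \<open>\<not> length y < WW\<close> by (metis length_drop diff_diff_cancel not_less less_irrefl)
  qed
  then show ?thesis using e True by (simp add: fsig_def)
next
  case False
  have yl: "\<not> length y < WW"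
  proof
    assume "length y < WW"
    then have "fst (fsig y) = y" "fst (fsig x) = drop (length x - WW) x" using False by (auto simp: fsig_def)
    then show False using e False \<open>length y < WW\<close> by (metis length_drop diff_diff_cancel not_less less_irrefl)
  qed
  have e1: "drop (length x - WW) x = drop (length y - WW) y" "GG x = GG y" "SS x = SS y"
    using e False yl by (auto simp: fsig_def)
  have W: "2 * DD \<le> WW" by (simp add: WW_def)
  show ?thesis unfolding st_def
  proof
    fix z
    let ?p1 = "length x - WW" and ?p2 = "length y - WW"
    have dr: "drop ?p1 (x @ z) = drop ?p2 (y @ z)" using e1(1) False yl by simp
    have tx: "take (length x) (x @ z) = take (length x) x" by simp
    have ty: "take (length y) (y @ z) = take (length y) y" by simp
    have Gx: "(\<forall>i<?p1. \<not> occ R (x@z) i) = GG x"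
      unfolding GG_def using occ_local[OF fin tx] by (auto simp: WW_def)
    have Gy: "(\<forall>i<?p2. \<not> occ R (y@z) i) = GG y"
      unfolding GG_def using occ_local[OF fin ty] by (auto simp: WW_def)
    have S: "\<forall>s. s + DD \<le> WW \<longrightarrow> reach R (x@z) (?p1+s) = reach R (y@z) (?p2+s)"
    proof (intro allI impI)
      fix s assume s: "s + DD \<le> WW"
      have eqx: "?p1 + s = length x - (WW - s)" "?p1 + s + DD \<le> length x" using s False by linarith+
      have eqy: "?p2 + s = length y - (WW - s)" "?p2 + s + DD \<le> length y" using s yl by linarith+
      have "reach R (x@z) (?p1+s) = reach R x (?p1 + s)"
        using reach_local[OF fin tx] reach_local[OF fin tx[symmetric]] eqx(2) by blast
      also have "\<dots> = reach R x (length x - (WW - s))" using eqx(1) by simp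
      also have "\<dots> = (WW - s \<in> SS x)" unfolding SS_def using s by auto
      also have "\<dots> = (WW - s \<in> SS y)" using e1 by simp
      also have "\<dots> = reach R y (length y - (WW - s))" unfolding SS_def using s by auto
      also have "\<dots> = reach R y (?p2 + s)" using eqy(1) by simp
      also have "\<dots> = reach R (y@z) (?p2+s)"
        using reach_local[OF fin ty] reach_local[OF fin ty[symmetric]] eqy(2) by blast
      finally show "reach R (x@z) (?p1+s) = reach R (y@z) (?p2+s)" .
    qed
    have RR: "\<forall>t. reach R (x@z) (?p1+t) = reach R (y@z) (?p2+t)"
      using reach_det[OF fin W dr _ _ _ S] Gx Gy e1(2) by simp
    have RR': "\<forall>t. reach R (y@z) (?p2+t) = reach R (x@z) (?p1+t)" using RR by simp
    show "sig (x @ z) = sig (y @ z)"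
    proof
      fix d
      have lx: "length (x@z) - ?p1 = length (y@z) - ?p2" using False yl by simp
      show "sig (x @ z) d = sig (y @ z) d"
        unfolding sig_def
        using Qc_det[OF fin W dr _ _ RR, of d] Qc_det[OF fin W dr[symmetric] _ _ RR', of d] False yl DD_pos
        by (auto simp: WW_def)
    qed
  qed
qed

lemma finite_st: assumes "finite R" "finite A" shows "finite (st ` lists A)"
proof -
  have "fsig ` lists A \<subseteq> {xs. set xs \<subseteq> A \<and> length xs \<le> WW} \<times> UNIV \<times> Pow {..WW}"
  proof
    fix v assume "v \<in> fsig ` lists A"
    then obtain x where x: "x \<in> lists A" "v = fsig x" by blast
    have "set (drop (length x - WW) x) \<subseteq> A" using x(1) by (meson in_listsD in_mono set_drop_subset subsetI)
    moreover have "SS x \<subseteq> {..WW}" by (auto simp: SS_def)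
    ultimately show "v \<in> {xs. set xs \<subseteq> A \<and> length xs \<le> WW} \<times> UNIV \<times> Pow {..WW}"
      using x by (auto simp: fsig_def)
  qed
  moreover have "finite ({xs. set xs \<subseteq> A \<and> length xs \<le> WW} \<times> (UNIV :: bool set) \<times> Pow {..WW})"
    using assms(2) by (simp add: finite_lists_length_le)
  ultimately have ff: "finite (fsig ` lists A)" by (rule finite_subset)
  let ?h = "\<lambda>v. st (SOME x. x \<in> lists A \<and> fsig x = v)"
  have "st ` lists A \<subseteq> ?h ` (fsig ` lists A)"
  proof
    fix s assume "s \<in> st ` lists A"
    then obtain x where x: "x \<in> lists A" "s = st x" by blast
    have "\<exists>x'. x' \<in> lists A \<and> fsig x' = fsig x" using x by blast
    then have "(SOME x'. x' \<in> lists A \<and> fsig x' = fsig x) \<in> lists A \<and> fsig (SOME x'. x' \<in> lists A \<and> fsig x' = fsig x) = fsig x"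
      by (rule someI_ex)
    then have "?h (fsig x) = st x" using fsig_det[OF assms(1)] by metis
    then show "s \<in> ?h ` (fsig ` lists A)" using x by force
  qed
  then show ?thesis using ff finite_subset by blast
qed

end



definition loopc :: "instr list" where
 "loopc = [JumpZ 0 18, ReadIn 3 1, Add 4 2 3, JumpZ 3 12, Load 2 4, Add 1 1 5, Add 4 2 6, Load 3 4, JumpZ 3 1,
    Add 0 1 5, Sub 0 0 7, Halt, Load 3 4, JumpZ 3 17, Add 0 1 5, Add 0 0 5, Sub 0 0 3, Halt]"

definition initc :: "(nat \<Rightarrow> nat) \<Rightarrow> nat list \<Rightarrow> instr list" where
  "initc M as = concat (map (\<lambda>a. [LoadConst 8 a, LoadConst 9 (M a), Store 8 9]) as)"

definition prog :: "(nat \<Rightarrow> nat) \<Rightarrow> nat \<Rightarrow> nat \<Rightarrow> nat \<Rightarrow> nat \<Rightarrow> instr list" where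
  "prog M T E1 L b0 = loopc @ [LoadConst 5 1, LoadConst 6 E1, LoadConst 7 L, LoadConst 2 b0] @
     initc M [100..<100+T] @ [JumpZ 0 1]"

lemma run_step: "pc < length P \<Longrightarrow> P!pc \<noteq> Halt \<Longrightarrow>
   (step P inp ^^ Suc n) (pc, g) = (step P inp ^^ n) (exec inp (P!pc) (pc,g))"
  by (simp add: funpow_Suc_right step_def halted_def del: funpow.simps)

lemma fp_num: "(f ^^ numeral k) c = (f ^^ pred_numeral k) (f c)"
  by (simp add: numeral_eq_Suc funpow_Suc_right del: funpow.simps)

lemma fp_1: "((f :: 'b \<Rightarrow> 'b) ^^ Suc 0) c = f c" by simp

lemma fp_one: "((f :: 'b \<Rightarrow> 'b) ^^ 1) c = f c" by (metis One_nat_def fp_1)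

lemma length_initc[simp]: "length (initc M as) = 3 * length as"
  by (induction as) (auto simp: initc_def)

lemma initc_Cons: "initc M (a # as) = [LoadConst 8 a, LoadConst 9 (M a), Store 8 9] @ initc M as"
  by (simp add: initc_def)

lemma init_run:
  assumes "\<forall>k < 3 * length as. P ! (pc + k) = initc M as ! k" "pc + 3 * length as \<le> length P"
    "\<forall>a\<in>set as. 10 \<le> a"
  shows "\<exists>g'. (step P inp ^^ (3 * length as)) (pc, g) = (pc + 3 * length as, g') \<and>
     (\<forall>a\<in>set as. g' a = M a) \<and> (\<forall>r. r \<noteq> 8 \<and> r \<noteq> 9 \<and> r \<notin> set as \<longrightarrow> g' r = g r)"
  using assms
proof (induction as arbitrary: pc g)
  case Nil
  then show ?case by simp
next
  case (Cons a as)
  have p0: "P ! pc = LoadConst 8 a" using Cons.prems(1)[rule_format, of 0] by (simp add: initc_Cons)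
  have p1: "P ! Suc pc = LoadConst 9 (M a)" using Cons.prems(1)[rule_format, of 1] by (simp add: initc_Cons)
  have p2: "P ! Suc (Suc pc) = Store 8 9" using Cons.prems(1)[rule_format, of 2] by (simp add: initc_Cons)
  have a10: "10 \<le> a" using Cons.prems(3) by simp
  let ?g1 = "g(8 := a, 9 := M a, a := M a)"
  have st3: "(step P inp ^^ 3) (pc, g) = (pc + 3, ?g1)"
    using Cons.prems(2) a10 by (simp add: fp_num fp_1 step_def halted_def p0 p1 p2 del: funpow.simps)
  have h1: "\<forall>k < 3 * length as. P ! (pc + 3 + k) = initc M as ! k"
  proof (intro allI impI)
    fix k assume "k < 3 * length as"
    then have "P ! (pc + (3 + k)) = initc M (a # as) ! (3 + k)" using Cons.prems(1) by simp
    then show "P ! (pc + 3 + k) = initc M as ! k" by (simp add: initc_Cons add.assoc)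
  qed
  obtain g' where g': "(step P inp ^^ (3 * length as)) (pc + 3, ?g1) = (pc + 3 + 3 * length as, g')"
    "\<forall>a\<in>set as. g' a = M a" "\<forall>r. r \<noteq> 8 \<and> r \<noteq> 9 \<and> r \<notin> set as \<longrightarrow> g' r = ?g1 r"
    using Cons.IH[OF h1 _ ] Cons.prems(2,3) by fastforce
  have "(step P inp ^^ (3 * length (a # as))) (pc, g) = (step P inp ^^ (3 * length as)) ((step P inp ^^ 3) (pc, g))"
  proof -
    have e: "3 * length (a#as) = 3 * length as + 3" by simp
    show ?thesis by (simp only: e funpow_add comp_apply)
  qed
  also have "\<dots> = (pc + 3 * length (a # as), g')" using st3 g'(1) by simp
  finally show ?case using g'(2,3) a10 by (intro exI[of _ g']) auto
qed


definition Inv :: "(nat \<Rightarrow> nat) \<Rightarrow> nat \<Rightarrow> nat \<Rightarrow> nat \<Rightarrow> (nat \<Rightarrow> nat) \<Rightarrow> nat \<Rightarrow> (nat \<Rightarrow> nat) \<Rightarrow> bool" where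
  "Inv M T E1 L base m g \<longleftrightarrow> g 0 = 0 \<and> g 1 = m \<and> g 2 = base m \<and> g 5 = 1 \<and> g 6 = E1 \<and> g 7 = L \<and>
     (\<forall>a. 100 \<le> a \<and> a < 100 + T \<longrightarrow> g a = M a)"

definition Out :: "(nat \<Rightarrow> nat) \<Rightarrow> nat \<Rightarrow> nat \<Rightarrow> (nat \<Rightarrow> nat) \<Rightarrow> nat \<Rightarrow> nat \<Rightarrow> nat \<Rightarrow> bool" where
  "Out M E1 L base n m ov \<longleftrightarrow>
    (\<exists>m'. m < m' \<and> m' \<le> n \<and> M (base m' + E1) \<noteq> 0 \<and> ov = Suc m' - L) \<or>
    ((\<forall>m'. m < m' \<and> m' \<le> n \<longrightarrow> M (base m' + E1) = 0) \<and>
      ov = (if M (base n) = 0 then 0 else n + 2 - M (base n)))"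

lemma length_loopc: "length loopc = 18" by (simp add: loopc_def)

lemma prog_nth_small: "k < 18 \<Longrightarrow> prog M T E1 L b0 ! k = loopc ! k"
  unfolding prog_def by (simp add: nth_append length_loopc)

lemma length_prog: "length (prog M T E1 L b0) = 23 + 3 * T"
  by (simp add: prog_def loopc_def)

lemma loop_run:
  assumes P: "P = prog M T E1 L b0"
   and hb: "\<forall>m \<le> length inp. 100 \<le> base m \<and> base m + E1 < 100 + T"
   and htr: "\<forall>m < length inp. inp!m + 1 < E1 \<and> M (base m + (inp!m + 1)) = base (Suc m)"
  shows "m \<le> length inp \<Longrightarrow> Inv M T E1 L base m g \<Longrightarrow>
    \<exists>t \<le> 8 * (length inp - m) + 10. halted P ((step P inp ^^ t) (1, g)) \<and>
       Out M E1 L base (length inp) m (snd ((step P inp ^^ t) (1, g)) 0)"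
proof (induction "length inp - m" arbitrary: m g)
  case 0
  then have m: "m = length inp" by simp
  have I: "g 0 = 0" "g 1 = m" "g 2 = base m" "g 5 = 1" "g 6 = E1" "g 7 = L"
    "\<And>a. 100 \<le> a \<Longrightarrow> a < 100 + T \<Longrightarrow> g a = M a"
    using 0(3) unfolding Inv_def by auto
  have b: "100 \<le> base m" "base m + E1 < 100 + T" using hb m by auto
  have Pn: "\<And>k. k < 18 \<Longrightarrow> P ! k = loopc ! k" using P prog_nth_small by simp
  have lP: "18 < length P" using P length_prog by simp
  let ?v = "M (base m)"
  have gv: "g (base m) = ?v" using I(7) b by simp
  let ?c5 = "(step P inp ^^ 5) (1, g)"
  have c5: "fst ?c5 = (if ?v = 0 then 17 else 14) \<and> snd ?c5 3 = ?v \<and> snd ?c5 0 = 0 \<and> snd ?c5 1 = m \<and> snd ?c5 5 = 1"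
    using lP b I gv m
    by (simp add: fp_num fp_1 step_def halted_def Pn loopc_def del: funpow.simps)
  show ?case
  proof (cases "?v = 0")
    case True
    have "halted P ?c5" using c5 True Pn lP by (simp add: halted_def loopc_def)
    moreover have "Out M E1 L base (length inp) m (snd ?c5 0)"
      using c5 True m unfolding Out_def by auto
    ultimately show ?thesis by (intro exI[of _ 5]) simp
  next
    case False
    let ?c8 = "(step P inp ^^ 8) (1, g)"
    have e: "?c8 = (step P inp ^^ 3) ?c5"
      by (simp only: funpow_add[of 3 5 "step P inp", simplified] comp_apply)
    have f14: "fst ?c5 = 14" using c5 False by simp
    obtain g5 where c5e: "?c5 = (14, g5)" using f14 by (cases ?c5) simp
    have g5: "g5 3 = ?v" "g5 0 = 0" "g5 1 = m" "g5 5 = 1" using c5 c5e by auto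
    have "fst ((step P inp ^^ 3) (14, g5)) = 17 \<and> snd ((step P inp ^^ 3) (14, g5)) 0 = m + 2 - ?v"
      using g5 lP False by (simp add: fp_num fp_1 step_def halted_def Pn loopc_def del: funpow.simps)
    then have "fst ?c8 = 17 \<and> snd ?c8 0 = m + 2 - ?v" using e c5e by simp
    moreover then have "halted P ?c8" using Pn lP by (simp add: halted_def loopc_def)
    ultimately show ?thesis using False m unfolding Out_def
      by (intro exI[of _ 8]) auto
  qed
next
  case (Suc n)
  then have m: "m < length inp" by simp
  have I: "g 0 = 0" "g 1 = m" "g 2 = base m" "g 5 = 1" "g 6 = E1" "g 7 = L"
    "\<And>a. 100 \<le> a \<Longrightarrow> a < 100 + T \<Longrightarrow> g a = M a"
    using Suc(4) unfolding Inv_def by auto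
  have b: "100 \<le> base m" "base m + E1 < 100 + T" "100 \<le> base (Suc m)" "base (Suc m) + E1 < 100 + T"
    using hb m by auto
  have tr: "inp!m + 1 < E1" "M (base m + (inp!m + 1)) = base (Suc m)" using htr m by auto
  have Pn: "\<And>k. k < 18 \<Longrightarrow> P ! k = loopc ! k" using P prog_nth_small by simp
  have lP: "18 < length P" using P length_prog by simp
  let ?f = "M (base (Suc m) + E1)"
  have g1: "g (base m + (inp!m + 1)) = base (Suc m)" using I(7) b tr by simp
  have g2: "g (base (Suc m) + E1) = ?f" using I(7) b by simp
  let ?c7 = "(step P inp ^^ 7) (1, g)"
  have c7: "fst ?c7 = 8 \<and> snd ?c7 3 = ?f \<and> snd ?c7 0 = 0 \<and> snd ?c7 1 = Suc m \<and> snd ?c7 2 = base (Suc m)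
     \<and> snd ?c7 5 = 1 \<and> snd ?c7 6 = E1 \<and> snd ?c7 7 = L \<and> (\<forall>a. 100 \<le> a \<and> a < 100 + T \<longrightarrow> snd ?c7 a = M a)"
    using lP b I g1 g2 m tr
    by (simp add: fp_num fp_1 step_def halted_def Pn loopc_def del: funpow.simps)
  have f8: "fst ?c7 = 8" using c7 by simp
  obtain g7 where c7e: "?c7 = (8, g7)" using f8 by (cases ?c7) simp
  have g7: "g7 3 = ?f" "g7 0 = 0" "g7 1 = Suc m" "g7 2 = base (Suc m)" "g7 5 = 1" "g7 6 = E1" "g7 7 = L"
     "\<forall>a. 100 \<le> a \<and> a < 100 + T \<longrightarrow> g7 a = M a" using c7 c7e by auto
  show ?case
  proof (cases "?f = 0")
    case True
    let ?c8 = "(step P inp ^^ 8) (1, g)"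
    have e: "?c8 = step P inp ?c7"
      by (simp only: funpow_add[of 1 7 "step P inp", simplified] comp_apply fp_1)
    have c8: "?c8 = (1, g7)"
      unfolding e c7e using g7 True Pn lP by (simp add: step_def halted_def loopc_def)
    have inv: "Inv M T E1 L base (Suc m) g7" using g7 unfolding Inv_def by auto
    have "n = length inp - Suc m" using Suc(2) by simp
    from Suc(1)[OF this _ inv] m obtain t where t: "t \<le> 8 * (length inp - Suc m) + 10"
      "halted P ((step P inp ^^ t) (1, g7))"
      "Out M E1 L base (length inp) (Suc m) (snd ((step P inp ^^ t) (1, g7)) 0)" by auto
    have e2: "(step P inp ^^ (t + 8)) (1, g) = (step P inp ^^ t) (1, g7)"
      by (simp only: funpow_add comp_apply c8)
    have "Out M E1 L base (length inp) m (snd ((step P inp ^^ t) (1, g7)) 0)"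
      using t(3) unfolding Out_def
    proof (elim disjE exE conjE)
      fix m' assume "Suc m < m'" "m' \<le> length inp" "M (base m' + E1) \<noteq> 0"
        "snd ((step P inp ^^ t) (1, g7)) 0 = Suc m' - L"
      then show "(\<exists>m'. m < m' \<and> m' \<le> length inp \<and> M (base m' + E1) \<noteq> 0 \<and>
         snd ((step P inp ^^ t) (1, g7)) 0 = Suc m' - L) \<or>
         ((\<forall>m'. m < m' \<and> m' \<le> length inp \<longrightarrow> M (base m' + E1) = 0) \<and>
          snd ((step P inp ^^ t) (1, g7)) 0 = (if M (base (length inp)) = 0 then 0
             else length inp + 2 - M (base (length inp))))"
        by (intro disjI1 exI[of _ m']) simp
    next
      assume a: "\<forall>m'. Suc m < m' \<and> m' \<le> length inp \<longrightarrow> M (base m' + E1) = 0"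
        "snd ((step P inp ^^ t) (1, g7)) 0 = (if M (base (length inp)) = 0 then 0
             else length inp + 2 - M (base (length inp)))"
      have "\<forall>m'. m < m' \<and> m' \<le> length inp \<longrightarrow> M (base m' + E1) = 0"
      proof (intro allI impI)
        fix m' assume "m < m' \<and> m' \<le> length inp"
        then show "M (base m' + E1) = 0" using a(1) True by (cases "m' = Suc m") auto
      qed
      then show "(\<exists>m'. m < m' \<and> m' \<le> length inp \<and> M (base m' + E1) \<noteq> 0 \<and>
         snd ((step P inp ^^ t) (1, g7)) 0 = Suc m' - L) \<or>
         ((\<forall>m'. m < m' \<and> m' \<le> length inp \<longrightarrow> M (base m' + E1) = 0) \<and>
          snd ((step P inp ^^ t) (1, g7)) 0 = (if M (base (length inp)) = 0 then 0
             else length inp + 2 - M (base (length inp))))" using a(2) by (intro disjI2 conjI)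
    qed
    then show ?thesis using t(1,2) e2 m by (intro exI[of _ "t + 8"]) auto
  next
    case False
    let ?c10 = "(step P inp ^^ 10) (1, g)"
    have e: "?c10 = (step P inp ^^ 3) ?c7"
      by (simp only: funpow_add[of 3 7 "step P inp", simplified] comp_apply)
    have "fst ((step P inp ^^ 3) (8, g7)) = 11 \<and> snd ((step P inp ^^ 3) (8, g7)) 0 = Suc (Suc m) - L"
      using g7 lP False by (simp add: fp_num fp_1 step_def halted_def Pn loopc_def del: funpow.simps)
    then have "fst ?c10 = 11 \<and> snd ?c10 0 = Suc (Suc m) - L" using e c7e by simp
    moreover then have "halted P ?c10" using Pn lP by (simp add: halted_def loopc_def)
    ultimately show ?thesis using False m unfolding Out_def
      by (intro exI[of _ 10]) auto
  qed
qed


lemma prog_run: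
  assumes P: "P = prog M T E1 L b0"
   and hb: "\<forall>m \<le> length inp. 100 \<le> base m \<and> base m + E1 < 100 + T"
   and htr: "\<forall>m < length inp. inp!m + 1 < E1 \<and> M (base m + (inp!m + 1)) = base (Suc m)"
   and b0: "b0 = base 0"
  shows "\<exists>t \<le> 3 * T + 8 * length inp + 16. halted P (run P inp t) \<and>
       Out M E1 L base (length inp) 0 (snd (run P inp t) 0)"
proof -
  have Pn: "\<And>k. k < 18 \<Longrightarrow> P ! k = loopc ! k" using P prog_nth_small by simp
  have lP: "length P = 23 + 3 * T" using P length_prog by simp
  have Pc: "P ! 18 = LoadConst 5 1" "P ! 19 = LoadConst 6 E1" "P ! 20 = LoadConst 7 L" "P ! 21 = LoadConst 2 b0"
    using P by (simp_all add: prog_def nth_append length_loopc)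
  let ?g0 = "(\<lambda>_. 0 :: nat)(5 := 1, 6 := E1, 7 := L, 2 := b0)"
  have s5: "(step P inp ^^ 5) (0, \<lambda>_. 0) = (22, ?g0)"
    using lP Pc Pn[of 0] by (simp add: fp_num fp_1 step_def halted_def loopc_def del: funpow.simps)
  let ?as = "[100..<100+T]"
  have "\<forall>k < 3 * length ?as. P ! (22 + k) = initc M ?as ! k"
    using P by (simp add: prog_def nth_append length_loopc)
  from init_run[OF this] lP obtain g1 where g1: "(step P inp ^^ (3 * T)) (22, ?g0) = (22 + 3 * T, g1)"
    "\<forall>a\<in>set ?as. g1 a = M a" "\<forall>r. r \<noteq> 8 \<and> r \<noteq> 9 \<and> r \<notin> set ?as \<longrightarrow> g1 r = ?g0 r"
    by fastforce
  have Pj: "P ! (22 + 3 * T) = JumpZ 0 1" using P by (simp add: prog_def nth_append length_loopc)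
  have g10: "g1 0 = 0" using g1(3) by auto
  have s1: "step P inp (22 + 3 * T, g1) = (1, g1)" using Pj lP g10 by (simp add: step_def halted_def)
  have inv: "Inv M T E1 L base 0 g1" unfolding Inv_def using g1(2,3) b0 by auto
  obtain t where t: "t \<le> 8 * (length inp - 0) + 10" "halted P ((step P inp ^^ t) (1, g1))"
     "Out M E1 L base (length inp) 0 (snd ((step P inp ^^ t) (1, g1)) 0)"
    using loop_run[OF P hb htr _ inv] by auto
  have "run P inp (t + 1 + 3 * T + 5) = (step P inp ^^ t) (1, g1)"
    unfolding run_def by (simp only: funpow_add comp_apply s5 g1(1) fp_one s1)
  then show ?thesis using t by (intro exI[of _ "t + 1 + 3 * T + 5"]) auto
qed




lemma st_snoc: "st R (x @ [a]) = (\<lambda>z. st R x (a # z))"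
  unfolding st_def by simp

lemma st_nil: "st R x [] = sig R x"
  unfolding st_def by simp

lemma Qc_iff: "Qc R w k \<longleftrightarrow> k \<le> length w \<and> clean_overlap_prefix R w (take k w)"
proof
  assume "Qc R w k" then show "k \<le> length w \<and> clean_overlap_prefix R w (take k w)" by (rule Qc_imp)
next
  assume a: "k \<le> length w \<and> clean_overlap_prefix R w (take k w)"
  then have "Qc R w (length (take k w))" using imp_Qc by blast
  then show "Qc R w k" using a by simp
qed

lemma sig_take: assumes "finite R" "m \<le> length w"
  shows "sig R (take m w) (DD R) \<longleftrightarrow> DD R \<le> m \<and> Qc R w (m - DD R)"
proof -
  have t: "take m (take m w) = take m w" by simp
  show ?thesis unfolding sig_def using assms
    Qc_local[OF assms(1) t, of "m - DD R"] Qc_local[OF assms(1) t[symmetric], of "m - DD R"]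
    by (auto simp: min_def)
qed

theorem lemma6p15:
  fixes A :: "'a set" and R :: "('a list \<times> 'a list) set" and enc :: "'a \<Rightarrow> nat"
  assumes "presentation A R" and "C4 R" and "inj_on enc A"
  shows "\<exists>(P :: instr list) (c :: nat). \<forall>w \<in> lists A.
           \<exists>t \<le> c * length w + c.
             halted P (run P (map enc w) t) \<and> output_ok R w (snd (run P (map enc w) t) 0)"
proof -
  have finA: "finite A" and finR: "finite R" using assms(1) unfolding presentation_def by auto
  note inj = assms(3)
  define L where "L = DD R"
  have L1: "1 \<le> L" using DD_pos[of R] unfolding L_def by simp
  define SSt where "SSt = st R ` lists A"
  have finS: "finite SSt" unfolding SSt_def using finite_st[OF finR finA] .
  define N where "N = card SSt"
  obtain h where h: "bij_betw h {0..<N} SSt" using ex_bij_betw_nat_finite[OF finS] unfolding N_def by blast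
  define idx where "idx = inv_into {0..<N} h"
  have idx: "\<And>s. s \<in> SSt \<Longrightarrow> idx s < N \<and> h (idx s) = s"
    unfolding idx_def using h
    by (metis atLeastLessThan_iff bij_betw_def bij_betw_inv_into_right inv_into_into)
  define E1 where "E1 = Suc (Suc (Max (insert 0 (enc ` A))))"
  have encE: "\<And>a. a \<in> A \<Longrightarrow> enc a + 1 < E1"
    unfolding E1_def using finA by (simp add: le_imp_less_Suc)
  have E1_2: "2 \<le> E1" unfolding E1_def by simp
  define K where "K = Suc E1"
  define T where "T = N * K"
  define bs where "bs s = 100 + idx s * K" for s
  define trn where "trn s b = (\<lambda>z. s (b # z))" for s :: "'a list \<Rightarrow> nat \<Rightarrow> bool" and b
  define endv where "endv s = (if \<exists>d. s [] d then Suc (LEAST d. s [] d) else 0)" for s :: "'a list \<Rightarrow> nat \<Rightarrow> bool"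
  define Mf where "Mf s o' = (if o' = 0 then endv s else if o' = E1 then (if s [] L then 1 else 0)
      else (if \<exists>b\<in>A. enc b + 1 = o' then bs (trn s (SOME b. b \<in> A \<and> enc b + 1 = o')) else 0))"
    for s o'
  define M where "M a = Mf (h ((a - 100) div K)) ((a - 100) mod K)" for a
  have M_at: "M (bs s + o') = Mf s o'" if "s \<in> SSt" "o' < K" for s o'
  proof -
    have e: "bs s + o' - 100 = o' + idx s * K" unfolding bs_def by simp
    have K0: "K \<noteq> 0" unfolding K_def by simp
    have "(bs s + o' - 100) div K = idx s" "(bs s + o' - 100) mod K = o'"
      unfolding e using that(2) K0 by simp_all
    then show ?thesis unfolding M_def using idx[OF that(1)] by simp
  qed
  have bs_range: "100 \<le> bs s \<and> bs s + E1 < 100 + T" if "s \<in> SSt" for s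
  proof -
    have "idx s < N" using idx[OF that] by simp
    then have "Suc (idx s) * K \<le> N * K" by (intro mult_le_mono1) simp
    then show ?thesis unfolding bs_def T_def K_def by simp
  qed
  define P where "P = prog M T E1 L (bs (st R []))"
  define c where "c = 3 * T + 16"
  show ?thesis
  proof (rule exI[of _ P], rule exI[of _ c], rule ballI)
    fix w assume w: "w \<in> lists A"
    define inp where "inp = map enc w"
    define base where "base m = bs (st R (take m w))" for m
    have stS: "st R (take m w) \<in> SSt" for m
    proof -
      have "take m w \<in> lists A" using w set_take_subset[of m w] by (auto simp: in_lists_conv_set)
      then show ?thesis unfolding SSt_def by (rule imageI)
    qed
    have hb: "\<forall>m \<le> length inp. 100 \<le> base m \<and> base m + E1 < 100 + T"
      unfolding base_def using bs_range stS by blast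
    have htr: "\<forall>m < length inp. inp!m + 1 < E1 \<and> M (base m + (inp!m + 1)) = base (Suc m)"
    proof (intro allI impI conjI)
      fix m assume m: "m < length inp"
      then have m': "m < length w" unfolding inp_def by simp
      have wA: "w ! m \<in> A" using w m' by (simp add: in_lists_conv_set)
      show "inp!m + 1 < E1" unfolding inp_def using encE[OF wA] m' by simp
      have o: "inp!m + 1 < K" "inp ! m + 1 \<noteq> 0" "inp ! m + 1 \<noteq> E1"
        unfolding inp_def using encE[OF wA] m' K_def by simp_all
      have ex: "\<exists>b\<in>A. enc b + 1 = inp ! m + 1" using wA m' unfolding inp_def by auto
      have sm: "(SOME b. b \<in> A \<and> enc b + 1 = inp ! m + 1) = w ! m"
      proof (rule some_equality)
        show "w ! m \<in> A \<and> enc (w ! m) + 1 = inp ! m + 1" using wA m' unfolding inp_def by simp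
        fix b assume "b \<in> A \<and> enc b + 1 = inp ! m + 1"
        then show "b = w ! m" using inj wA m' unfolding inp_def by (simp add: inj_on_def)
      qed
      have "M (base m + (inp!m + 1)) = bs (trn (st R (take m w)) (w ! m))"
        unfolding base_def using M_at[OF stS o(1)] o ex sm unfolding Mf_def by simp
      also have "trn (st R (take m w)) (w ! m) = st R (take (Suc m) w)"
        unfolding trn_def using m' by (simp add: take_Suc_conv_app_nth st_snoc)
      finally show "M (base m + (inp!m + 1)) = base (Suc m)" unfolding base_def .
    qed
    have b0: "bs (st R []) = base 0" unfolding base_def by simp
    obtain t where t: "t \<le> 3 * T + 8 * length inp + 16" "halted P (run P inp t)"
      "Out M E1 L base (length inp) 0 (snd (run P inp t) 0)"
      using prog_run[OF P_def hb htr b0] by blast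
    have flag: "M (base m + E1) \<noteq> 0 \<longleftrightarrow> L \<le> m \<and> Qc R w (m - L)" if "m \<le> length w" for m
    proof -
      have "M (base m + E1) = Mf (st R (take m w)) E1" unfolding base_def using M_at[OF stS] K_def by simp
      also have "\<dots> = (if sig R (take m w) L then 1 else 0)" unfolding Mf_def using E1_2 by (simp add: st_def)
      finally show ?thesis using sig_take[OF finR that] unfolding L_def by simp
    qed
    have endM: "M (base (length w)) = (if \<exists>d. sig R w d then Suc (LEAST d. sig R w d) else 0)"
    proof -
      have "M (base (length w)) = M (base (length w) + 0)" by simp
      also have "\<dots> = Mf (st R w) 0"
      proof -
        have sw: "st R w \<in> SSt" using stS[of "length w"] by simp
        have "0 < K" unfolding K_def by simp
        then show ?thesis unfolding base_def using M_at[OF sw, of 0] by simp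
      qed
      finally show ?thesis unfolding Mf_def endv_def by (simp add: st_def)
    qed
    have lw: "length inp = length w" unfolding inp_def by simp
    have "output_ok R w (snd (run P inp t) 0)"
      using t(3) unfolding Out_def lw
    proof (elim disjE exE conjE)
      fix m' assume m': "0 < m'" "m' \<le> length w" "M (base m' + E1) \<noteq> 0"
        and ov: "snd (run P inp t) 0 = Suc m' - L"
      then have q: "L \<le> m'" "Qc R w (m' - L)" using flag by auto
      then have cl: "m' - L \<le> length w" "clean_overlap_prefix R w (take (m' - L) w)" using Qc_iff by auto
      show ?thesis unfolding output_ok_def using cl ov q(1)
        by (auto intro!: exI[of _ "m' - L"] simp: Suc_diff_le)
    next
      assume fl: "\<forall>m'. 0 < m' \<and> m' \<le> length w \<longrightarrow> M (base m' + E1) = 0"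
        and ov: "snd (run P inp t) 0 = (if M (base (length w)) = 0 then 0 else length w + 2 - M (base (length w)))"
      show ?thesis
      proof (cases "\<exists>d. sig R w d")
        case True
        define d where "d = (LEAST d. sig R w d)"
        have sd: "sig R w d" unfolding d_def using True by (metis LeastI)
        then have sd': "d \<le> length w" "Qc R w (length w - d)" unfolding sig_def by auto
        have "M (base (length w)) = Suc d" using endM True unfolding d_def by simp
        then have ov': "snd (run P inp t) 0 = Suc (length w - d)" using ov sd'(1) by simp
        have "clean_overlap_prefix R w (take (length w - d) w)" using sd'(2) Qc_iff by auto
        then show ?thesis unfolding output_ok_def using ov' by auto
      next
        case False
        have "M (base (length w)) = 0" using endM False by simp
        then have ov': "snd (run P inp t) 0 = 0" using ov by simp
        have "\<not> (\<exists>p. clean_overlap_prefix R w p)"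
        proof
          assume "\<exists>p. clean_overlap_prefix R w p"
          then obtain p where p: "clean_overlap_prefix R w p" by blast
          have Qp: "Qc R w (length p)" using imp_Qc[OF p] by simp
          then have kw: "length p \<le> length w" using Qc_iff by auto
          show False
          proof (cases "length p + L \<le> length w")
            case True
            have "M (base (length p + L) + E1) \<noteq> 0" using flag[OF True] Qp by simp
            moreover have "0 < length p + L" using L1 by simp
            ultimately show False using fl[rule_format, of "length p + L"] True by simp
          next
            case c2: False
            have d1: "length w - length p \<le> DD R" using c2 unfolding L_def by simp
            have d2: "length w - (length w - length p) = length p" using kw by simp
            have "sig R w (length w - length p)" unfolding sig_def using d1 d2 Qp by simp
            then show False using False by simp
          qed
        qed
        then show ?thesis unfolding output_ok_def using ov' by simp
      qed
    qed
    moreover have "t \<le> c * length w + c" using t(1) lw unfolding c_def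
      by (simp add: add_mult_distrib)
    ultimately show "\<exists>t \<le> c * length w + c. halted P (run P (map enc w) t) \<and>
        output_ok R w (snd (run P (map enc w) t) 0)" using t(2) unfolding inp_def by blast
  qed
qed


end
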